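(* Let $q$ be a prime power, $n\ge 2$, $\lambda$ a nontrivial additive character of $\mathbb{F}_q$, and $x\in\mathbb{F}_q^*$. Then \[ \left|\sum_{\alpha_1,\ldots,\alpha_{n-1}\in\mathbb{F}_q^*}\lambda\!\left(\alpha_1+\cdots+\alpha_{n-1}+\frac{x}{\alpha_1\cdots\alpha_{n-1}}\right)\right| \le \left(1-\frac{1}{q-1}\right)q^{n/2}+\frac{1}{q-1}. \] *)

theory Defs
  imports Complex_Main "HOL-Library.FuncSet"
begin

definition additive_character :: "('a::{field,finite} \<Rightarrow> complex) \<Rightarrow> bool" where
  "additive_character \<psi> \<longleftrightarrow>
     (\<forall>a b. \<psi> (a + b) = \<psi> a * \<psi> b) \<and> (\<forall>a. norm (\<psi> a) = 1)"

definition nontrivial_character :: "('a::{field,finite} \<Rightarrow> complex) \<Rightarrow> bool" where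
  "nontrivial_character \<psi> \<longleftrightarrow> (\<exists>a. \<psi> a \<noteq> 1)"

end

theory Submission
  imports Defs "HOL-Analysis.Analysis"
begin

lemma psi0:
  fixes \<psi> :: "'a::{field,finite} \<Rightarrow> complex"
  assumes "additive_character \<psi>" shows "\<psi> 0 = 1"
proof -
  have a: "\<psi> 0 = \<psi> 0 * \<psi> 0" using assms unfolding additive_character_def
    by (metis add_0)
  have "\<psi> 0 \<noteq> 0" using assms unfolding additive_character_def
    by (metis norm_zero zero_neq_one)
  with a show ?thesis by (metis mult_cancel_left1)
qed

lemma psi_cnj:
  fixes \<psi> :: "'a::{field,finite} \<Rightarrow> complex"
  assumes "additive_character \<psi>" shows "cnj (\<psi> a) = \<psi> (-a)"
proof -
  have m: "\<psi> a * \<psi> (-a) = 1" using assms psi0[OF assms] unfolding additive_character_def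
    by (metis add.right_inverse)
  have n: "\<psi> a * cnj (\<psi> a) = 1" using assms unfolding additive_character_def
    by (metis complex_norm_square of_real_1 power_one)
  have "\<psi> a \<noteq> 0" using m by auto
  then show ?thesis using m n by (metis mult_left_cancel)
qed

lemma psi_sum_all:
  fixes \<psi> :: "'a::{field,finite} \<Rightarrow> complex"
  assumes "additive_character \<psi>" "nontrivial_character \<psi>"
  shows "(\<Sum>b\<in>UNIV. \<psi> b) = 0"
proof -
  obtain a where a: "\<psi> a \<noteq> 1" using assms(2) unfolding nontrivial_character_def by auto
  have "(\<Sum>b\<in>UNIV. \<psi> b) = (\<Sum>b\<in>UNIV. \<psi> (a + b))"
    by (rule sum.reindex_bij_witness[where i="\<lambda>b. a + b" and j="\<lambda>b. b - a"]) auto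
  also have "\<dots> = \<psi> a * (\<Sum>b\<in>UNIV. \<psi> b)"
    using assms(1) unfolding additive_character_def by (simp add: sum_distrib_left)
  finally show ?thesis using a
    by (metis mult_cancel_right1)
qed

lemma psi_sum_scaled:
  fixes \<psi> :: "'a::{field,finite} \<Rightarrow> complex"
  assumes "additive_character \<psi>" "nontrivial_character \<psi>"
  shows "(\<Sum>x\<in>UNIV-{0}. \<psi> (x * c)) = (if c = 0 then of_nat (card (UNIV::'a set)) - 1 else -1)"
proof (cases "c = 0")
  case True
  then show ?thesis using psi0[OF assms(1)] by (simp add: card_Diff_singleton of_nat_diff)
next
  case False
  have "(\<Sum>x\<in>UNIV. \<psi> (x * c)) = (\<Sum>b\<in>UNIV. \<psi> b)"
    using False by (intro sum.reindex_bij_witness[where i="\<lambda>b. b / c" and j="\<lambda>b. b * c"]) auto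
  also have "\<dots> = 0" using psi_sum_all[OF assms] .
  finally have "(\<Sum>x\<in>UNIV. \<psi> (x * c)) = 0" .
  moreover have "(\<Sum>x\<in>UNIV. \<psi> (x * c)) = \<psi> (0 * c) + (\<Sum>x\<in>UNIV-{0}. \<psi> (x * c))"
    by (rule sum.remove) auto
  ultimately show ?thesis using False psi0[OF assms(1)] by (simp add: add_eq_0_iff)
qed

lemma sum_div_reindex:
  fixes x :: "'a::{field,finite}"
  assumes "x \<noteq> 0"
  shows "(\<Sum>u\<in>UNIV-{0}. h (x / u)) = (\<Sum>u\<in>UNIV-{0}. h u)"
  using assms by (intro sum.reindex_bij_witness[where i="\<lambda>u. x / u" and j="\<lambda>u. x / u"]) auto

definition Top :: "('a::{field,finite} \<Rightarrow> complex) \<Rightarrow> ('a \<Rightarrow> complex) \<Rightarrow> 'a \<Rightarrow> complex" where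
  "Top \<psi> f x = (\<Sum>u\<in>UNIV-{0}. \<psi> (x / u) * f u)"

lemma T_norm:
  fixes \<psi> :: "'a::{field,finite} \<Rightarrow> complex"
  assumes "additive_character \<psi>" "nontrivial_character \<psi>"
  shows "(\<Sum>x\<in>UNIV-{0}. Top \<psi> f x * cnj (Top \<psi> f x))
     = of_nat (card (UNIV::'a set)) * (\<Sum>x\<in>UNIV-{0}. f x * cnj (f x))
       - (\<Sum>x\<in>UNIV-{0}. f x) * cnj (\<Sum>x\<in>UNIV-{0}. f x)"
proof -
  let ?N = "UNIV - {0::'a}"
  let ?q = "of_nat (card (UNIV::'a set)) :: complex"
  have add: "\<psi> (a + b) = \<psi> a * \<psi> b" for a b
    using assms(1) unfolding additive_character_def by auto
  have step1: "Top \<psi> f x * cnj (Top \<psi> f x)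
      = (\<Sum>u\<in>?N. \<Sum>v\<in>?N. f u * cnj (f v) * \<psi> (x * (1/u - 1/v)))" for x
  proof -
    have "Top \<psi> f x * cnj (Top \<psi> f x)
       = (\<Sum>u\<in>?N. \<psi> (x / u) * f u) * (\<Sum>v\<in>?N. \<psi> (-(x / v)) * cnj (f v))"
      unfolding Top_def cnj_sum by (simp add: psi_cnj[OF assms(1)])
    also have "\<dots> = (\<Sum>u\<in>?N. \<Sum>v\<in>?N. \<psi> (x / u) * f u * (\<psi> (-(x / v)) * cnj (f v)))"
      by (rule sum_product)
    also have "\<dots> = (\<Sum>u\<in>?N. \<Sum>v\<in>?N. f u * cnj (f v) * \<psi> (x * (1/u - 1/v)))"
    proof (intro sum.cong refl)
      fix u v
      have "\<psi> (x * (1/u - 1/v)) = \<psi> (x / u + (-(x / v)))"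
        by (simp add: algebra_simps)
      also have "\<dots> = \<psi> (x / u) * \<psi> (-(x / v))" by (rule add)
      finally show "\<psi> (x / u) * f u * (\<psi> (-(x / v)) * cnj (f v)) = f u * cnj (f v) * \<psi> (x * (1/u - 1/v))"
        by (simp only: mult_ac)
    qed
    finally show ?thesis .
  qed
  have "(\<Sum>x\<in>?N. Top \<psi> f x * cnj (Top \<psi> f x))
      = (\<Sum>x\<in>?N. \<Sum>u\<in>?N. \<Sum>v\<in>?N. f u * cnj (f v) * \<psi> (x * (1/u - 1/v)))"
    using step1 by simp
  also have "\<dots> = (\<Sum>u\<in>?N. \<Sum>x\<in>?N. \<Sum>v\<in>?N. f u * cnj (f v) * \<psi> (x * (1/u - 1/v)))"
    by (rule sum.swap)
  also have "\<dots> = (\<Sum>u\<in>?N. \<Sum>v\<in>?N. \<Sum>x\<in>?N. f u * cnj (f v) * \<psi> (x * (1/u - 1/v)))"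
    by (rule sum.cong[OF refl], rule sum.swap)
  also have "\<dots> = (\<Sum>u\<in>?N. \<Sum>v\<in>?N. f u * cnj (f v) * (if u = v then ?q - 1 else -1))"
  proof (intro sum.cong refl)
    fix u v assume uv: "u \<in> ?N" "v \<in> ?N"
    have e: "(1/u - 1/v = 0) = (u = v)" using uv by (auto simp: field_simps)
    show "(\<Sum>x\<in>?N. f u * cnj (f v) * \<psi> (x * (1/u - 1/v))) = f u * cnj (f v) * (if u = v then ?q - 1 else -1)"
      by (simp add: sum_distrib_left[symmetric] psi_sum_scaled[OF assms] e)
  qed
  also have "\<dots> = (\<Sum>u\<in>?N. \<Sum>v\<in>?N. (if u = v then ?q * (f u * cnj (f v)) else 0) - f u * cnj (f v))"
    by (intro sum.cong refl) (simp add: algebra_simps)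
  also have "\<dots> = (\<Sum>u\<in>?N. ?q * (f u * cnj (f u))) - (\<Sum>u\<in>?N. \<Sum>v\<in>?N. f u * cnj (f v))"
    by (simp add: sum_subtractf)
  also have "(\<Sum>u\<in>?N. \<Sum>v\<in>?N. f u * cnj (f v)) = (\<Sum>x\<in>?N. f x) * cnj (\<Sum>x\<in>?N. f x)"
    by (simp add: sum_product cnj_sum)
  finally show ?thesis by (simp add: sum_distrib_left)
qed

lemma T_const:
  fixes \<psi> :: "'a::{field,finite} \<Rightarrow> complex"
  assumes "additive_character \<psi>" "nontrivial_character \<psi>" "x \<noteq> 0"
  shows "Top \<psi> (\<lambda>_. c) x = - c"
proof -
  have "Top \<psi> (\<lambda>_. c) x = (\<Sum>u\<in>UNIV-{0}. \<psi> (x / u)) * c"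
    unfolding Top_def by (simp add: sum_distrib_right)
  also have "(\<Sum>u\<in>UNIV-{0}. \<psi> (x / u)) = (\<Sum>u\<in>UNIV-{0}. \<psi> u)"
    by (rule sum_div_reindex[OF assms(3)])
  also have "\<dots> = (\<Sum>u\<in>UNIV-{0}. \<psi> (u * 1))" by simp
  also have "\<dots> = -1" by (simp only: psi_sum_scaled[OF assms(1,2)]) simp
  finally show ?thesis by simp
qed

lemma T_add:
  "Top \<psi> (\<lambda>y. f y + c) x = Top \<psi> f x + Top \<psi> (\<lambda>_. c) x"
  unfolding Top_def by (simp add: distrib_left sum.distrib)

lemma T_sum:
  fixes \<psi> :: "'a::{field,finite} \<Rightarrow> complex"
  assumes "additive_character \<psi>" "nontrivial_character \<psi>"
  shows "(\<Sum>x\<in>UNIV-{0}. Top \<psi> f x) = - (\<Sum>x\<in>UNIV-{0}. f x)"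
proof -
  have "(\<Sum>x\<in>UNIV-{0}. Top \<psi> f x) = (\<Sum>u\<in>UNIV-{0}. \<Sum>x\<in>UNIV-{0}. \<psi> (x * (1/u)) * f u)"
    unfolding Top_def by (subst sum.swap) simp
  also have "\<dots> = (\<Sum>u\<in>UNIV-{0}. - f u)"
  proof (rule sum.cong[OF refl])
    fix u :: 'a assume "u \<in> UNIV - {0}"
    then show "(\<Sum>x\<in>UNIV-{0}. \<psi> (x * (1/u)) * f u) = - f u"
      by (simp only: sum_distrib_right[symmetric] psi_sum_scaled[OF assms]) simp
  qed
  finally show ?thesis by (simp add: sum_negf)
qed

definition Ssum :: "('a::{field,finite} \<Rightarrow> complex) \<Rightarrow> 'a \<Rightarrow> nat \<Rightarrow> complex" where
  "Ssum \<psi> x m = (\<Sum>\<alpha> \<in> PiE {..<m} (\<lambda>_. UNIV - {0}). \<psi> ((\<Sum>i<m. \<alpha> i) + x / (\<Prod>i<m. \<alpha> i)))"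

lemma Ssum_0:
  fixes \<psi> :: "'a::{field,finite} \<Rightarrow> complex"
  shows "Ssum \<psi> x 0 = \<psi> x"
  unfolding Ssum_def by simp

lemma Ssum_Suc:
  fixes \<psi> :: "'a::{field,finite} \<Rightarrow> complex"
  assumes "additive_character \<psi>"
  shows "Ssum \<psi> x (Suc m) = (\<Sum>a\<in>UNIV-{0}. \<psi> a * Ssum \<psi> (x / a) m)"
proof -
  let ?N = "UNIV - {0::'a}"
  let ?F = "\<lambda>\<alpha>. \<psi> ((\<Sum>i<Suc m. \<alpha> i) + x / (\<Prod>i<Suc m. \<alpha> i))"
  let ?c = "\<lambda>(y::'a, g::nat \<Rightarrow> 'a). g(m := y)"
  have "Ssum \<psi> x (Suc m) = sum ?F (?c ` (?N \<times> PiE {..<m} (\<lambda>_. ?N)))"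
    unfolding Ssum_def lessThan_Suc PiE_insert_eq by simp
  also have "\<dots> = sum (?F \<circ> ?c) (?N \<times> PiE {..<m} (\<lambda>_. ?N))"
    by (rule sum.reindex) (rule inj_combinator, simp)
  also have "\<dots> = (\<Sum>(a,\<beta>)\<in>?N \<times> PiE {..<m} (\<lambda>_. ?N). ?F (\<beta>(m := a)))"
    by (rule sum.cong[OF refl]) (simp only: comp_def split: prod.splits, blast)
  also have "\<dots> = (\<Sum>a\<in>?N. \<Sum>\<beta>\<in>PiE {..<m} (\<lambda>_. ?N). ?F (\<beta>(m := a)))"
    by (rule sum.cartesian_product[symmetric])
  also have "\<dots> = (\<Sum>a\<in>?N. \<Sum>\<beta>\<in>PiE {..<m} (\<lambda>_. ?N). \<psi> a * \<psi> ((\<Sum>i<m. \<beta> i) + (x / a) / (\<Prod>i<m. \<beta> i)))"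
  proof (intro sum.cong refl)
    fix a :: 'a and \<beta> :: "nat \<Rightarrow> 'a"
    have s0: "(\<Sum>i<m. (\<beta>(m := a)) i) = (\<Sum>i<m. \<beta> i)"
      by (rule sum.cong) auto
    have p0: "(\<Prod>i<m. (\<beta>(m := a)) i) = (\<Prod>i<m. \<beta> i)"
      by (rule prod.cong) auto
    have s: "(\<Sum>i<Suc m. (\<beta>(m := a)) i) = (\<Sum>i<m. \<beta> i) + a"
      by (simp only: sum.lessThan_Suc s0) simp
    have p: "(\<Prod>i<Suc m. (\<beta>(m := a)) i) = (\<Prod>i<m. \<beta> i) * a"
      by (simp only: prod.lessThan_Suc p0) simp
    have e: "x / ((\<Prod>i<m. \<beta> i) * a) = (x / a) / (\<Prod>i<m. \<beta> i)"
      by (simp add: mult.commute)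
    have "?F (\<beta>(m := a)) = \<psi> (a + ((\<Sum>i<m. \<beta> i) + (x / a) / (\<Prod>i<m. \<beta> i)))"
      unfolding s p e by (simp only: add_ac)
    also have "\<dots> = \<psi> a * \<psi> ((\<Sum>i<m. \<beta> i) + (x / a) / (\<Prod>i<m. \<beta> i))"
      using assms unfolding additive_character_def by blast
    finally show "?F (\<beta>(m := a)) = \<psi> a * \<psi> ((\<Sum>i<m. \<beta> i) + (x / a) / (\<Prod>i<m. \<beta> i))" .
  qed
  also have "\<dots> = (\<Sum>a\<in>?N. \<psi> a * Ssum \<psi> (x / a) m)"
    unfolding Ssum_def by (simp add: sum_distrib_left)
  finally show ?thesis .
qed

lemma Ssum_Suc_T:
  fixes \<psi> :: "'a::{field,finite} \<Rightarrow> complex"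
  assumes "additive_character \<psi>" "x \<noteq> 0"
  shows "Ssum \<psi> x (Suc m) = Top \<psi> (\<lambda>u. Ssum \<psi> u m) x"
proof -
  have "Ssum \<psi> x (Suc m) = (\<Sum>a\<in>UNIV-{0}. \<psi> a * Ssum \<psi> (x / a) m)"
    by (rule Ssum_Suc[OF assms(1)])
  also have "\<dots> = (\<Sum>u\<in>UNIV-{0}. \<psi> (x / u) * Ssum \<psi> (x / (x / u)) m)"
    by (rule sum_div_reindex[OF assms(2), symmetric])
  also have "\<dots> = Top \<psi> (\<lambda>u. Ssum \<psi> u m) x"
    unfolding Top_def using assms(2) by (intro sum.cong refl) simp
  finally show ?thesis .
qed

lemma pointwise:
  fixes g :: "'a::{field,finite} \<Rightarrow> complex"
  assumes "(\<Sum>y\<in>UNIV-{0}. g y) = 0" "x \<noteq> 0"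
  shows "(real (card (UNIV::'a set)) - 1) * (norm (g x))^2
         \<le> (real (card (UNIV::'a set)) - 2) * (\<Sum>y\<in>UNIV-{0}. (norm (g y))^2)"
proof -
  let ?N = "UNIV - {0::'a}"
  let ?M = "?N - {x}"
  let ?q = "real (card (UNIV::'a set))"
  have xN: "x \<in> ?N" using assms(2) by simp
  have q2: "card (UNIV::'a set) \<ge> 2"
  proof -
    have "card {0::'a, 1} \<le> card (UNIV::'a set)" by (intro card_mono) auto
    then show ?thesis by simp
  qed
  have cM: "real (card ?M) = ?q - 2"
    using xN q2 by (simp add: card_Diff_singleton of_nat_diff)
  have sN: "(\<Sum>y\<in>?N. g y) = g x + (\<Sum>y\<in>?M. g y)"
    using xN by (simp add: sum.remove)
  have gx: "g x = - (\<Sum>y\<in>?M. g y)" using sN assms(1) by (simp add: add_eq_0_iff2)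
  have "norm (g x) \<le> (\<Sum>y\<in>?M. norm (g y))"
    unfolding gx norm_minus_cancel by (rule norm_sum)
  then have "(norm (g x))^2 \<le> (\<Sum>y\<in>?M. norm (g y))^2"
    by (simp add: power_mono)
  also have "\<dots> \<le> (\<Sum>y\<in>?M. (norm (g y))^2) * card ?M"
    by (rule sum_squared_le_sum_of_squares)
  also have "(\<Sum>y\<in>?M. (norm (g y))^2) = (\<Sum>y\<in>?N. (norm (g y))^2) - (norm (g x))^2"
    using xN by (simp add: sum_diff1)
  finally have "(norm (g x))^2 \<le> ((\<Sum>y\<in>?N. (norm (g y))^2) - (norm (g x))^2) * (?q - 2)"
    unfolding cM .
  then show ?thesis by (simp add: algebra_simps)
qed

lemma card_ge2: "card (UNIV::'a::{field,finite} set) \<ge> 2"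
proof -
  have "card {0::'a, 1} \<le> card (UNIV::'a set)" by (intro card_mono) auto
  then show ?thesis by simp
qed

lemma nsq_eq:
  fixes f :: "'b \<Rightarrow> complex"
  shows "complex_of_real (\<Sum>y\<in>A. (norm (f y))^2) = (\<Sum>y\<in>A. f y * cnj (f y))"
  by (simp only: of_real_sum complex_norm_square)

lemma norm_add_real_sq:
  fixes z :: complex
  shows "(norm (z + complex_of_real r))^2 = (norm z)^2 + 2 * r * Re z + r^2"
  by (simp only: cmod_power2) (simp add: power2_eq_square algebra_simps)

theorem corollary1:
  fixes \<psi> :: "'a::{field,finite} \<Rightarrow> complex" and n :: nat and x :: 'a
  assumes "n \<ge> 2"
    and "additive_character \<psi>" and "nontrivial_character \<psi>"
    and "x \<noteq> 0"
  shows "norm (\<Sum>\<alpha> \<in> PiE {..<n-1} (\<lambda>_. UNIV - {0}).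
            \<psi> ((\<Sum>i<n-1. \<alpha> i) + x / (\<Prod>i<n-1. \<alpha> i)))
         \<le> (1 - 1 / (real (card (UNIV::'a set)) - 1)) * real (card (UNIV::'a set)) powr (real n / 2)
            + 1 / (real (card (UNIV::'a set)) - 1)"
proof -
  let ?N = "UNIV - {0::'a}"
  define Q where "Q = real (card (UNIV::'a set))"
  have Q2: "Q \<ge> 2" unfolding Q_def using card_ge2[where 'a='a] by simp
  have "Q * 2 \<le> Q * Q" using Q2 by (intro mult_left_mono) auto
  then have QQ: "1 + Q * Q \<noteq> Q * 2" by linarith
  have cardN: "real (card ?N) = Q - 1"
    unfolding Q_def using card_ge2[where 'a='a] by (simp add: card_Diff_singleton of_nat_diff)
  have psiN: "(\<Sum>y\<in>?N. \<psi> y) = -1"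
  proof -
    have "(\<Sum>y\<in>?N. \<psi> y) = (\<Sum>y\<in>?N. \<psi> (y * 1))" by simp
    also have "\<dots> = -1" by (simp only: psi_sum_scaled[OF assms(2,3)]) simp
    finally show ?thesis .
  qed
  define G where "G m y = Ssum \<psi> y m + complex_of_real ((-1)^m / (Q - 1))" for m y
  have Gstep: "G (Suc m) y = Top \<psi> (G m) y" if "y \<noteq> 0" for m y
  proof -
    have "Top \<psi> (G m) y = Top \<psi> (\<lambda>u. Ssum \<psi> u m) y + Top \<psi> (\<lambda>_. complex_of_real ((-1)^m / (Q - 1))) y"
      unfolding G_def by (rule T_add)
    also have "\<dots> = Ssum \<psi> y (Suc m) - complex_of_real ((-1)^m / (Q - 1))"
      using Ssum_Suc_T[OF assms(2) that] T_const[OF assms(2,3) that] by simp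
    finally show ?thesis unfolding G_def by simp
  qed
  have Gsum: "(\<Sum>y\<in>?N. G m y) = 0" for m
  proof (induction m)
    case 0
    have "(\<Sum>y\<in>?N. G 0 y) = (\<Sum>y\<in>?N. \<psi> y) + of_nat (card ?N) * complex_of_real (1 / (Q - 1))"
      unfolding G_def by (simp add: Ssum_0 sum.distrib)
    also have "of_nat (card ?N) = complex_of_real (Q - 1)"
      using cardN by (metis of_real_of_nat_eq)
    finally show ?case using Q2 psiN by (simp add: field_simps)
  next
    case (Suc m)
    have "(\<Sum>y\<in>?N. G (Suc m) y) = (\<Sum>y\<in>?N. Top \<psi> (G m) y)"
      using Gstep by (intro sum.cong) auto
    also have "\<dots> = 0" using T_sum[OF assms(2,3)] Suc by simp
    finally show ?case .
  qed
  have Gnorm: "(\<Sum>y\<in>?N. (norm (G m y))^2) = Q^(Suc m) * (Q - 2) / (Q - 1)" for m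
  proof (induction m)
    case 0
    have "(\<Sum>y\<in>?N. (norm (G 0 y))^2) = (\<Sum>y\<in>?N. 1 + 2 * (1 / (Q - 1)) * Re (\<psi> y) + (1 / (Q - 1))^2)"
    proof (rule sum.cong[OF refl])
      fix y
      have "norm (\<psi> y) = 1" using assms(2) unfolding additive_character_def by auto
      moreover have "(norm (G 0 y))^2 = (norm (\<psi> y))^2 + 2 * (1 / (Q - 1)) * Re (\<psi> y) + (1 / (Q - 1))^2"
        unfolding G_def Ssum_0 power_0 by (rule norm_add_real_sq)
      ultimately show "(norm (G 0 y))^2 = 1 + 2 * (1 / (Q - 1)) * Re (\<psi> y) + (1 / (Q - 1))^2"
        by simp
    qed
    also have "\<dots> = (Q - 1) + 2 * (1 / (Q - 1)) * Re (\<Sum>y\<in>?N. \<psi> y) + (Q - 1) * (1 / (Q - 1))^2"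
      using cardN by (simp add: sum.distrib sum_distrib_left Re_sum)
    also have "\<dots> = Q^(Suc 0) * (Q - 2) / (Q - 1)"
      using Q2 psiN by (simp add: field_simps power2_eq_square QQ)
    finally show ?case .
  next
    case (Suc m)
    have "complex_of_real (\<Sum>y\<in>?N. (norm (G (Suc m) y))^2) = (\<Sum>y\<in>?N. G (Suc m) y * cnj (G (Suc m) y))"
      by (rule nsq_eq)
    also have "\<dots> = (\<Sum>y\<in>?N. Top \<psi> (G m) y * cnj (Top \<psi> (G m) y))"
      using Gstep by (intro sum.cong) auto
    also have "\<dots> = of_nat (card (UNIV::'a set)) * (\<Sum>y\<in>?N. G m y * cnj (G m y))"
      using T_norm[OF assms(2,3)] Gsum by simp
    also have "\<dots> = complex_of_real (Q * (\<Sum>y\<in>?N. (norm (G m y))^2))"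
      unfolding nsq_eq[symmetric] Q_def by simp
    finally have "(\<Sum>y\<in>?N. (norm (G (Suc m) y))^2) = Q * (\<Sum>y\<in>?N. (norm (G m y))^2)"
      using of_real_eq_iff by blast
    then show ?case using Suc by simp
  qed
  define m where "m = n - 1"
  have nm: "n = Suc m" using assms(1) unfolding m_def by simp
  define B where "B = (1 - 1 / (Q - 1)) * Q powr (real n / 2)"
  have B0: "B \<ge> 0" unfolding B_def using Q2 by (simp add: field_simps)
  have Bsq: "B^2 = ((Q - 2) / (Q - 1))^2 * Q^n"
  proof -
    have "(Q powr (real n / 2))^2 = Q powr (real n / 2 + real n / 2)"
      by (simp only: power2_eq_square powr_add[symmetric])
    also have "\<dots> = Q^n" using Q2 by (simp add: powr_realpow)
    finally have "(Q powr (real n / 2))^2 = Q^n" .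
    moreover have "1 - 1 / (Q - 1) = (Q - 2) / (Q - 1)" using Q2 by (simp add: field_simps)
    ultimately show ?thesis unfolding B_def by (simp only: power_mult_distrib)
  qed
  have "(Q - 1) * (norm (G m x))^2 \<le> (Q - 2) * (\<Sum>y\<in>?N. (norm (G m y))^2)"
    using pointwise[OF Gsum assms(4)] unfolding Q_def .
  also have "\<dots> = (Q - 1) * B^2"
  proof -
    have Q1: "Q - 1 \<noteq> 0" using Q2 by simp
    show ?thesis unfolding Gnorm Bsq nm
      by (simp add: power2_eq_square divide_simps Q1)
  qed
  finally have "(norm (G m x))^2 \<le> B^2" using Q2 by simp
  then have GB: "norm (G m x) \<le> B" using B0 by (rule power2_le_imp_le)
  have "Ssum \<psi> x m = G m x - complex_of_real ((-1)^m / (Q - 1))" unfolding G_def by simp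
  then have "norm (Ssum \<psi> x m) \<le> norm (G m x) + norm (complex_of_real ((-1)^m / (Q - 1)))"
    by (simp add: norm_triangle_ineq4)
  also have "norm (complex_of_real ((-1)^m / (Q - 1))) = 1 / (Q - 1)"
    by (simp only: norm_of_real) (use Q2 in \<open>simp add: power_abs\<close>)
  finally have "norm (Ssum \<psi> x m) \<le> B + 1 / (Q - 1)" using GB by simp
  then show ?thesis unfolding Ssum_def B_def Q_def m_def .
qed

end
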